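(* Let the problem, the cone $\mathcal{C}$ and the complexity be as in the context, and assume $n_0\ge1$. Assume $$R=\sup_{k\in\mathbb{N}}\frac{\lambda_{n_{k-1}}}{\lambda_{n_k}}<\infty.$$ Let $\varepsilon,\rho>0$. Then for every $j\in\mathbb{N}$ satisfying $$\Big[\frac{(a+1)^2R^2}{(a-1)^2}+1\Big]\sum_{k=0}^{j}\frac{b^{2(k-j)}}{\lambda_{n_k}^2}<\frac{\rho^2}{\varepsilon^2},$$ one has $\mathrm{comp}(\mathcal{A}(\mathcal{C}),\varepsilon,\rho)\ge n_j$. In particular, $\mathrm{comp}(\mathcal{A}(\mathcal{C}),\varepsilon,\rho)\ge n_{j^*}$, where $j^*$ is the largest such $j$.
   Context: Let $\mathcal{F}$ and $\mathcal{G}$ be separable Hilbert spaces with orthonormal bases $(u_i)_{i\in\mathbb{N}}$ and $(v_i)_{i\in\mathbb{N}}$. Write $f=\sum_i\widehat f_iu_i$ with $\|f\|_{\mathcal{F}}=\|(\widehat f_i)_i\|_{\ell^2}$, and similarly for $\mathcal{G}$. Let $S:\mathcal{F}\to\mathcal{G}$ be the linear operator $S(f)=\sum_i\lambda_i\widehat f_iv_i$, where $\lambda_1\ge\lambda_2\ge\cdots>0$ and $\lambda_i\to0$. Let $\mathcal{B}_\rho=\{f:\|f\|_{\mathcal{F}}\le\rho\}$. For $\mathcal{H}\subseteq\mathcal{F}$, $\mathcal{A}(\mathcal{H})$ is the set of deterministic algorithms $A:\mathcal{H}\times(0,\infty)\to\mathcal{G}$ with $\|S(f)-A(f,\varepsilon)\|_{\mathcal{G}}\le\varepsilon$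 for all $f\in\mathcal{H}$ and all $\varepsilon>0$. Such an algorithm adaptively samples finitely many bounded linear functionals of $f$, and its output depends on $f$ only through those values. Costs are defined as follows: - $\mathrm{cost}(A,f,\varepsilon)$ is the number of functional values used to compute $A(f,\varepsilon)$; - $\mathrm{cost}(A,\mathcal{H},\varepsilon,\rho)=\sup\{\mathrm{cost}(A,f,\varepsilon):f\in\mathcal{H}\cap\mathcal{B}_\rho\}$; - $\mathrm{comp}(\mathcal{A}(\mathcal{H}),\varepsilon,\rho)=\min_{A\in\mathcal{A}(\mathcal{H})}\mathrm{cost}(A,\mathcal{H},\varepsilon,\rho)$. Let $n_0<n_1<\cdots$ be a strictly increasing, unbounded sequence of non-negative integers. For $j\in\mathbb{N}=\{1,2,\dots\}$ let $\sigma_j(f)=\|(\lambda_i\widehat f_i)_{i=n_{j-1}+1}^{n_j}\|_{\ell^2}$. Fix $0<b<1<a$ and let $\mathcal{C}=\{f\in\mathcal{F}:\sigma_{j+r}(f)\le ab^r\sigma_j(f)\ \forall j,r\in\mathbb{N}\}$. *)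

theory Defs
  imports Complex_Main "HOL-Library.Extended_Nat"
begin

text \<open>Elements of F (resp. G) are represented by their coefficient
  sequences w.r.t. the orthonormal basis (u_i) (resp. (v_i)), indexed by i = 1,2,...;
  the unused slot 0 is fixed to 0.\<close>

definition l2sp :: "(nat \<Rightarrow> real) set" where
  "l2sp = {f. f 0 = 0 \<and> summable (\<lambda>i. (f i)^2)}"

definition l2norm :: "(nat \<Rightarrow> real) \<Rightarrow> real" where
  "l2norm f = sqrt (\<Sum>i. (f i)^2)"

definition Sop :: "(nat \<Rightarrow> real) \<Rightarrow> (nat \<Rightarrow> real) \<Rightarrow> (nat \<Rightarrow> real)" where
  "Sop lam f = (\<lambda>i. lam i * f i)"

definition Bset :: "real \<Rightarrow> (nat \<Rightarrow> real) set" where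
  "Bset rho = {f \<in> l2sp. l2norm f \<le> rho}"

definition bounded_lin_functional :: "((nat \<Rightarrow> real) \<Rightarrow> real) \<Rightarrow> bool" where
  "bounded_lin_functional L \<longleftrightarrow>
     (\<forall>f\<in>l2sp. \<forall>g\<in>l2sp. \<forall>c::real.
        L (\<lambda>i. f i + g i) = L f + L g \<and> L (\<lambda>i. c * f i) = c * L f) \<and>
     (\<exists>K. \<forall>f\<in>l2sp. \<bar>L f\<bar> \<le> K * l2norm f)"

text \<open>A deterministic adaptive algorithm: for tolerance e and previously observed
  values ys, nxt e ys is the next functional to sample, stp e ys decides whether
  to stop, and outp e ys is the output (depending on f only through ys).\<close>
record alg =
  nxt :: "real \<Rightarrow> real list \<Rightarrow> (nat \<Rightarrow> real) \<Rightarrow> real"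
  stp :: "real \<Rightarrow> real list \<Rightarrow> bool"
  outp :: "real \<Rightarrow> real list \<Rightarrow> (nat \<Rightarrow> real)"

fun obs :: "alg \<Rightarrow> real \<Rightarrow> (nat \<Rightarrow> real) \<Rightarrow> nat \<Rightarrow> real list" where
  "obs A e f 0 = []"
| "obs A e f (Suc k) = obs A e f k @ [nxt A e (obs A e f k) f]"

definition terminates :: "alg \<Rightarrow> real \<Rightarrow> (nat \<Rightarrow> real) \<Rightarrow> bool" where
  "terminates A e f \<longleftrightarrow> (\<exists>k. stp A e (obs A e f k))"

definition alg_cost :: "alg \<Rightarrow> (nat \<Rightarrow> real) \<Rightarrow> real \<Rightarrow> nat" where
  "alg_cost A f e = (LEAST k. stp A e (obs A e f k))"

definition alg_out :: "alg \<Rightarrow> (nat \<Rightarrow> real) \<Rightarrow> real \<Rightarrow> (nat \<Rightarrow> real)" where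
  "alg_out A f e = outp A e (obs A e f (alg_cost A f e))"

definition admissible :: "(nat \<Rightarrow> real) \<Rightarrow> (nat \<Rightarrow> real) set \<Rightarrow> alg \<Rightarrow> bool" where
  "admissible lam H A \<longleftrightarrow>
     (\<forall>e>0. \<forall>ys. bounded_lin_functional (nxt A e ys)) \<and>
     (\<forall>f\<in>H. \<forall>e>0. terminates A e f \<and> alg_out A f e \<in> l2sp \<and>
        l2norm (\<lambda>i. Sop lam f i - alg_out A f e i) \<le> e)"

definition cost_set :: "alg \<Rightarrow> (nat \<Rightarrow> real) set \<Rightarrow> real \<Rightarrow> real \<Rightarrow> enat" where
  "cost_set A H e rho = (SUP f \<in> H \<inter> Bset rho. enat (alg_cost A f e))"

definition comp :: "(nat \<Rightarrow> real) \<Rightarrow> (nat \<Rightarrow> real) set \<Rightarrow> real \<Rightarrow> real \<Rightarrow> enat" where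
  "comp lam H e rho = (INF A \<in> {A. admissible lam H A}. cost_set A H e rho)"

definition sigma :: "(nat \<Rightarrow> real) \<Rightarrow> (nat \<Rightarrow> nat) \<Rightarrow> nat \<Rightarrow> (nat \<Rightarrow> real) \<Rightarrow> real" where
  "sigma lam n j f = sqrt (\<Sum>i\<in>{n (j - 1) + 1 .. n j}. (lam i * f i)^2)"

definition cone :: "(nat \<Rightarrow> real) \<Rightarrow> (nat \<Rightarrow> nat) \<Rightarrow> real \<Rightarrow> real \<Rightarrow> (nat \<Rightarrow> real) set" where
  "cone lam n a b = {f \<in> l2sp. \<forall>j\<ge>1. \<forall>r\<ge>1.
      sigma lam n (j + r) f \<le> a * b ^ r * sigma lam n j f}"

end

theory Submission
  imports Defs "HOL-Analysis.L2_Norm"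
begin


definition FS :: "(nat \<Rightarrow> real) set" where
  "FS = {h. h 0 = 0 \<and> finite {i. h i \<noteq> 0}}"

definition linFS :: "((nat \<Rightarrow> real) \<Rightarrow> real) \<Rightarrow> bool" where
  "linFS L \<longleftrightarrow> (\<forall>f\<in>FS. \<forall>g\<in>FS. \<forall>c::real.
        L (\<lambda>i. f i + g i) = L f + L g \<and> L (\<lambda>i. c * f i) = c * L f)"

lemma linFS_add: "linFS L \<Longrightarrow> f \<in> FS \<Longrightarrow> g \<in> FS \<Longrightarrow> L (\<lambda>i. f i + g i) = L f + L g"
  unfolding linFS_def by blast

lemma linFS_sc: "linFS L \<Longrightarrow> f \<in> FS \<Longrightarrow> L (\<lambda>i. c * f i) = c * L f"
  unfolding linFS_def by blast

lemma FS_I: "finite I \<Longrightarrow> 0 \<notin> I \<Longrightarrow> (\<And>i. i \<notin> I \<Longrightarrow> h i = 0) \<Longrightarrow> h \<in> FS"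
  unfolding FS_def by (auto intro: finite_subset[of _ I])

lemma FS_l2sp: "h \<in> FS \<Longrightarrow> h \<in> l2sp"
  unfolding FS_def l2sp_def
  by (auto intro!: summable_finite[of "{i. h i \<noteq> 0}"])

lemma blf_linFS: "bounded_lin_functional L \<Longrightarrow> linFS L"
  unfolding bounded_lin_functional_def linFS_def using FS_l2sp by blast

lemma FS_add: "f \<in> FS \<Longrightarrow> g \<in> FS \<Longrightarrow> (\<lambda>i. f i + g i) \<in> FS"
  unfolding FS_def
  by (auto intro: finite_subset[of _ "{i. f i \<noteq> 0} \<union> {i. g i \<noteq> 0}"])

lemma FS_scale: "f \<in> FS \<Longrightarrow> (\<lambda>i. c * f i) \<in> FS"
  unfolding FS_def
  by (auto intro: finite_subset[of _ "{i. f i \<noteq> 0}"])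

lemma FS_e: "i0 \<noteq> 0 \<Longrightarrow> (\<lambda>i. if i = i0 then 1 else 0) \<in> FS"
  by (rule FS_I[of "{i0}"]) auto

lemma lin_zero: "linFS L \<Longrightarrow> L (\<lambda>_. 0) = 0"
proof -
  assume L: "linFS L"
  have z: "(\<lambda>_. 0::real) \<in> FS" by (rule FS_I[of "{}"]) auto
  have "L (\<lambda>i. 0 * (\<lambda>_. 0::real) i) = 0 * L (\<lambda>_. 0)"
    by (rule linFS_sc[OF L z])
  then show ?thesis by simp
qed

lemma lin_vanish:
  assumes L: "linFS L" and fin: "finite I" and z: "0 \<notin> I"
    and e: "\<forall>i\<in>I. L (\<lambda>k. if k = i then 1 else 0) = 0"
  shows "(\<forall>i. i \<notin> I \<longrightarrow> g i = 0) \<Longrightarrow> L g = 0"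
  using fin z e
proof (induction I arbitrary: g rule: finite_induct)
  case empty
  then have "g = (\<lambda>_. 0)" by auto
  then show ?case using lin_zero[OF L] by simp
next
  case (insert x F)
  define g' where "g' = g(x := 0)"
  have g'F: "L g' = 0" using insert by (auto simp: g'_def)
  have g'FS: "g' \<in> FS" using insert by (intro FS_I[of F]) (auto simp: g'_def)
  have eFS: "(\<lambda>k. if k = x then 1 else 0) \<in> FS" using insert by (intro FS_e) auto
  have geq: "g = (\<lambda>i. g' i + (\<lambda>i. g x * (\<lambda>k. if k = x then 1 else 0) i) i)"
    by (auto simp: g'_def)
  have "L g = L g' + L (\<lambda>i. g x * (\<lambda>k. if k = x then 1 else 0) i)"
    by (subst geq) (use L g'FS FS_scale[OF eFS] in \<open>simp add: linFS_def\<close>)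
  also have "\<dots> = 0" using L eFS insert g'F unfolding linFS_def by simp
  finally show ?case .
qed

lemma kernel_aux:
  "length Ls = m \<Longrightarrow> finite I \<Longrightarrow> 0 \<notin> I \<Longrightarrow> card I > m \<Longrightarrow> (\<forall>L\<in>set Ls. linFS L) \<Longrightarrow>
   \<exists>g. (\<forall>i. i \<notin> I \<longrightarrow> g i = 0) \<and> (\<exists>i. g i \<noteq> 0) \<and> (\<forall>L\<in>set Ls. L g = 0)"
proof (induction m arbitrary: Ls I)
  case 0
  then obtain i0 where "i0 \<in> I" by fastforce
  then show ?case using 0 by (intro exI[of _ "\<lambda>i. if i = i0 then 1 else 0"]) auto
next
  case (Suc m)
  then obtain L Ls0 where LsE: "Ls = L # Ls0" and lenm: "length Ls0 = m" by (metis length_Suc_conv)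
  have LL: "linFS L" using Suc LsE by simp
  have lin0: "\<forall>M\<in>set Ls0. linFS M" using Suc LsE by simp
  show ?case
  proof (cases "\<exists>i0\<in>I. L (\<lambda>k. if k = i0 then 1 else 0) \<noteq> 0")
    case True
    then obtain i0 where i0: "i0 \<in> I" and d: "L (\<lambda>k. if k = i0 then 1 else 0) \<noteq> 0" by blast
    define d where "d = L (\<lambda>k. if k = i0 then 1 else 0)"
    define ee where "ee = (\<lambda>k. if k = i0 then 1 else (0::real))"
    define T where "T = (\<lambda>h. (\<lambda>i. h i + (- (L h / d)) * ee i))"
    have i00: "i0 \<noteq> 0" using i0 Suc.prems(3) by metis
    have eFS: "ee \<in> FS" unfolding ee_def using i00 by (rule FS_e)
    have TFS: "T h \<in> FS" if "h \<in> FS" for h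
      unfolding T_def by (intro FS_add FS_scale that eFS)
    have LT: "L (T h) = 0" if "h \<in> FS" for h
    proof -
      have "L (T h) = L h + L (\<lambda>i. (- (L h / d)) * ee i)"
        unfolding T_def by (rule linFS_add[OF LL that FS_scale[OF eFS]])
      also have "\<dots> = L h + (- (L h / d)) * L ee" by (subst linFS_sc[OF LL eFS]) (rule refl)
      finally have "L (T h) = L h + (- (L h / d)) * L ee" .
      then show ?thesis using d by (simp add: d_def ee_def)
    qed
    have Tadd: "T (\<lambda>i. f i + g i) = (\<lambda>i. T f i + T g i)" if "f \<in> FS" "g \<in> FS" for f g
      unfolding T_def linFS_add[OF LL that] by (rule ext) (simp add: add_divide_distrib algebra_simps)
    have Tsc: "T (\<lambda>i. c * f i) = (\<lambda>i. c * T f i)" if "f \<in> FS" for f c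
      using LL that unfolding T_def linFS_def by (auto simp: field_simps)
    define Ls' where "Ls' = map (\<lambda>M h. M (T h)) Ls0"
    have lin': "\<forall>M\<in>set Ls'. linFS M"
    proof
      fix M' assume "M' \<in> set Ls'"
      then obtain M where M: "M \<in> set Ls0" and M': "M' = (\<lambda>h. M (T h))" unfolding Ls'_def by auto
      have LM: "linFS M" using lin0 M by simp
      show "linFS M'" unfolding linFS_def M'
        using LM TFS Tadd Tsc unfolding linFS_def by simp
    qed
    have cI: "card (I - {i0}) > m" using Suc.prems i0 by simp
    have len': "length Ls' = m" using lenm by (simp add: Ls'_def)
    obtain g1 where g1: "\<forall>i. i \<notin> I - {i0} \<longrightarrow> g1 i = 0" "\<exists>i. g1 i \<noteq> 0" "\<forall>M\<in>set Ls'. M g1 = 0"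
      using Suc.IH[OF len' _ _ cI lin'] Suc.prems by auto
    have g1FS: "g1 \<in> FS" using g1(1) Suc.prems by (intro FS_I[of "I - {i0}"]) auto
    show ?thesis
    proof (intro exI[of _ "T g1"] conjI)
      show "\<forall>i. i \<notin> I \<longrightarrow> T g1 i = 0" using g1(1) i0 by (auto simp: T_def ee_def)
      obtain i1 where "g1 i1 \<noteq> 0" using g1(2) by auto
      then have "i1 \<noteq> i0" using g1(1) by auto
      then show "\<exists>i. T g1 i \<noteq> 0" using \<open>g1 i1 \<noteq> 0\<close> by (intro exI[of _ i1]) (auto simp: T_def ee_def)
      show "\<forall>M\<in>set Ls. M (T g1) = 0"
        using LT[OF g1FS] g1(3) unfolding Ls'_def LsE by auto
    qed
  next
    case False
    have cI: "card I > m" using Suc.prems by simp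
    obtain g where g: "\<forall>i. i \<notin> I \<longrightarrow> g i = 0" "\<exists>i. g i \<noteq> 0" "\<forall>M\<in>set Ls0. M g = 0"
      using Suc.IH[OF lenm _ _ cI lin0] Suc.prems by auto
    have "L g = 0" using lin_vanish[OF LL _ _ _ g(1)] Suc.prems False by auto
    then show ?thesis using g LsE by auto
  qed
qed

lemma kernel:
  "finite I \<Longrightarrow> 0 \<notin> I \<Longrightarrow> card I > length Ls \<Longrightarrow> (\<forall>L\<in>set Ls. linFS L) \<Longrightarrow>
   \<exists>g. (\<forall>i. i \<notin> I \<longrightarrow> g i = 0) \<and> (\<exists>i. g i \<noteq> 0) \<and> (\<forall>L\<in>set Ls. L g = 0)"
  using kernel_aux by blast



lemma L2_set_scale: "L2_set (\<lambda>i. c * f i) A = \<bar>c\<bar> * L2_set f A"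
  unfolding L2_set_def
  by (simp add: power_mult_distrib real_sqrt_mult flip: sum_distrib_left)

lemma L2_set_uminus: "L2_set (\<lambda>i. - f i) A = L2_set f A"
  unfolding L2_set_def by simp

lemma l2norm_fin: "finite N \<Longrightarrow> (\<And>i. i \<notin> N \<Longrightarrow> h i = 0) \<Longrightarrow> l2norm h = L2_set h N"
  unfolding l2norm_def L2_set_def by (subst suminf_finite[of N]) auto

lemma L2_le_l2norm: "summable (\<lambda>i. (d i)^2) \<Longrightarrow> finite A \<Longrightarrow> L2_set d A \<le> l2norm d"
  unfolding l2norm_def L2_set_def
  by (intro real_sqrt_le_mono sum_le_suminf) auto

lemma diff_summable:
  assumes h: "h \<in> FS" and u: "u \<in> l2sp"
  shows "summable (\<lambda>i. (lam i * h i - u i)^2)"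
proof -
  have s1: "summable (\<lambda>i. 2 * (lam i * h i)^2)"
    using h unfolding FS_def by (intro summable_finite[of "{i. h i \<noteq> 0}"]) auto
  have s2: "summable (\<lambda>i. 2 * (u i)^2)" using u unfolding l2sp_def by (auto intro: summable_mult)
  have s: "summable (\<lambda>i. 2 * (lam i * h i)^2 + 2 * (u i)^2)" using summable_add[OF s1 s2] .
  show ?thesis
  proof (rule summable_comparison_test'[OF s])
    fix i :: nat
    have "(lam i * h i - u i)^2 \<le> 2 * (lam i * h i)^2 + 2 * (u i)^2"
      using sum_squares_ge_zero[of "lam i * h i + u i" 0] by (simp add: power2_eq_square algebra_simps)
    then show "norm ((lam i * h i - u i)^2) \<le> 2 * (lam i * h i)^2 + 2 * (u i)^2" by simp
  qed
qed

lemma fool: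
  assumes adm: "admissible lam H A" and e: "e > 0" and f1H: "f1 \<in> H" and f1FS: "f1 \<in> FS"
    and k: "alg_cost A f1 e < N"
  shows "\<exists>g0. (\<forall>i. i \<notin> {1..N} \<longrightarrow> g0 i = 0) \<and> (\<exists>i. g0 i \<noteq> 0) \<and>
     (\<forall>t. alg_out A (\<lambda>i. f1 i + t * g0 i) e = alg_out A f1 e)"
proof -
  define k where "k = alg_cost A f1 e"
  define Ls where "Ls = map (\<lambda>l. nxt A e (obs A e f1 l)) [0..<k]"
  have lin: "\<forall>L\<in>set Ls. linFS L"
    using adm e unfolding Ls_def admissible_def by (auto intro: blf_linFS)
  have cI: "card {1..N} > length Ls" using k by (simp add: Ls_def k_def)
  obtain g0 where g0: "\<forall>i. i \<notin> {1..N} \<longrightarrow> g0 i = 0" "\<exists>i. g0 i \<noteq> 0" "\<forall>L\<in>set Ls. L g0 = 0"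
    using kernel[OF _ _ cI lin] by auto
  have g0FS: "g0 \<in> FS" using g0(1) by (intro FS_I[of "{1..N}"]) auto
  have trm: "stp A e (obs A e f1 k)"
    using adm e f1H unfolding admissible_def terminates_def k_def alg_cost_def
    by (metis (mono_tags, lifting) LeastI_ex)
  have notb: "\<not> stp A e (obs A e f1 l)" if "l < k" for l
    using that unfolding k_def alg_cost_def using not_less_Least by blast
  have "alg_out A (\<lambda>i. f1 i + t * g0 i) e = alg_out A f1 e" for t
  proof -
    define h where "h = (\<lambda>i. f1 i + t * g0 i)"
    have tg: "(\<lambda>i. t * g0 i) \<in> FS" by (rule FS_scale[OF g0FS])
    have ob: "obs A e h l = obs A e f1 l" if "l \<le> k" for l
      using that
    proof (induction l)
      case 0 then show ?case by simp
    next
      case (Suc l)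
      then have lk: "l < k" by simp
      define L where "L = nxt A e (obs A e f1 l)"
      have LL: "linFS L" using lin lk unfolding L_def Ls_def by auto
      have L0: "L g0 = 0" using g0(3) lk unfolding L_def Ls_def by auto
      have "L h = L f1 + L (\<lambda>i. t * g0 i)" unfolding h_def
        by (rule linFS_add[OF LL f1FS tg])
      also have "\<dots> = L f1" using linFS_sc[OF LL g0FS, of t] L0 by simp
      finally have "L h = L f1" .
      then show ?case using Suc by (simp add: L_def)
    qed
    have c: "alg_cost A h e = k"
      unfolding alg_cost_def
    proof (rule Least_equality)
      show "stp A e (obs A e h k)" using ob trm by simp
      fix y assume "stp A e (obs A e h y)"
      then show "k \<le> y" using ob notb by (metis le_less_linear less_imp_le)
    qed
    show ?thesis unfolding h_def[symmetric] alg_out_def c using ob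
      by (simp add: k_def)
  qed
  then show ?thesis using g0 by blast
qed



lemma sm_eq: "strict_mono (n::nat \<Rightarrow> nat) \<Longrightarrow> n l = n m \<longleftrightarrow> l = m"
  by (metis strict_mono_less_eq order_antisym order_refl)

lemma L2_set_sub:
  assumes B: "finite B" and u: "\<And>i. i \<notin> B \<Longrightarrow> u i = 0"
  shows "L2_set u A \<le> L2_set u B"
proof (cases "finite A")
  case False then show ?thesis by simp
next
  case True
  have "(\<Sum>i\<in>A. (u i)^2) = (\<Sum>i\<in>A \<inter> B. (u i)^2)"
    using True u by (intro sum.mono_neutral_right) auto
  also have "\<dots> \<le> (\<Sum>i\<in>B. (u i)^2)" using B by (intro sum_mono2) auto
  finally show ?thesis unfolding L2_set_def by (rule real_sqrt_le_mono)
qed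

lemma L2_set_abs: "L2_set (\<lambda>i. \<bar>f i\<bar>) A = L2_set f A"
  unfolding L2_set_def by simp

lemma lam_anti:
  assumes lam_mono: "\<forall>i\<ge>1. lam (Suc i) \<le> (lam i :: real)"
    and i1: "1 \<le> i" and ii: "i \<le> i'"
  shows "lam i' \<le> lam i"
  using ii
proof (induction i' rule: dec_induct)
  case base then show ?case by simp
next
  case (step k)
  then have "lam (Suc k) \<le> lam k" using lam_mono i1 by simp
  then show ?case using step by linarith
qed



lemma main_bound:
  fixes lam :: "nat \<Rightarrow> real" and n :: "nat \<Rightarrow> nat" and a b eps rho :: real and j :: nat
  assumes lam_pos: "\<forall>i\<ge>1. lam i > 0"
    and lam_mono: "\<forall>i\<ge>1. lam (Suc i) \<le> lam i"
    and n_mono: "strict_mono n"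
    and n0: "n 0 \<ge> 1"
    and b: "0 < b" "b < 1" and a: "1 < a"
    and R_fin: "bdd_above {lam (n (k - 1)) / lam (n k) | k. k \<ge> 1}"
    and eps: "eps > 0" and rho: "rho > 0"
    and j1: "j \<ge> 1"
    and cnd: "((a + 1)^2 * (Sup {lam (n (k - 1)) / lam (n k) | k. k \<ge> 1})^2 / (a - 1)^2 + 1)
            * (\<Sum>k=0..j. b powi (2 * (int k - int j)) / (lam (n k))^2) < rho^2 / eps^2"
  shows "enat (n j) \<le> comp lam (cone lam n a b) eps rho"
proof -
  define R where "R = Sup {lam (n (k - 1)) / lam (n k) | k. k \<ge> 1}"
  have Rge: "lam (n (k-1)) / lam (n k) \<le> R" if "k \<ge> 1" for k
    unfolding R_def using that by (intro cSup_upper R_fin) auto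
  have nge: "n k \<ge> 1" for k using n0 strict_mono_less_eq[OF n_mono, of 0 k] by simp
  have lamn: "lam (n k) > 0" for k using lam_pos nge by simp
  have ratio: "lam (n l) \<le> R * lam (n (Suc l))" for l
    using Rge[of "Suc l"] lamn[of "Suc l"] by (simp add: pos_divide_le_eq)
  have "R * lam (n 1) > 0" using ratio[of 0] lamn[of 0] by simp
  then have Rpos: "R > 0" using lamn[of 1] by (rule zero_less_mult_pos2)
  define q where "q = 1 / b"
  have q1: "q \<ge> 1" using b by (simp add: q_def)
  have bq: "b * q = 1" using b by (simp add: q_def)
  define K where "K = (a + 1) / (a - 1)"
  have K1: "K \<ge> 1" using a by (simp add: K_def)
  have aK: "(a - 1) * K = a + 1" using a by (simp add: K_def)
  define w where "w l = (q^(j-l))^2 / (lam (n l))^2" for l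
  have w0: "w l \<ge> 0" for l by (simp add: w_def)
  define P where "P = (\<Sum>l<j. w l)"
  define T where "T = (\<Sum>l\<in>{1..j}. w l)"
  define S where "S = (\<Sum>l=0..j. w l)"
  have P0: "P \<ge> 0" unfolding P_def by (intro sum_nonneg w0)
  have T0: "T \<ge> 0" unfolding T_def by (intro sum_nonneg w0)
  have SP: "S = P + w j"
  proof -
    have "{0..j} = insert j {..<j}" by auto
    then show ?thesis unfolding S_def P_def by simp
  qed
  have wj: "w j = 1 / (lam (n j))^2" by (simp add: w_def power_one_over)
  have wstep: "w (Suc l) \<le> R^2 * b^2 * w l" if "l < j" for l
  proof -
    define Q where "Q = (q^(j - Suc l))^2"
    have Q0: "Q \<ge> 0" by (simp add: Q_def)
    have "j - l = Suc (j - Suc l)" using that by simp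
    then have hq: "q^(j-l) = q * q^(j - Suc l)" by simp
    have e: "(q^(j-l))^2 = q^2 * Q" using hq by (simp add: Q_def power_mult_distrib)
    have "R^2 * b^2 * w l = R^2 * ((b*q)^2 * Q) / (lam (n l))^2"
      unfolding w_def e by (simp add: power_mult_distrib mult_ac)
    then have "R^2 * b^2 * w l = R^2 * Q / (lam (n l))^2" using bq by simp
    moreover have "w (Suc l) = (R^2 * Q) / (R^2 * (lam (n (Suc l)))^2)"
      unfolding w_def Q_def using Rpos by simp
    moreover have "(R^2 * Q) / (R^2 * (lam (n (Suc l)))^2) \<le> R^2 * Q / (lam (n l))^2"
    proof (rule frac_le)
      show "0 \<le> R^2 * Q" using Q0 by simp
      show "0 < (lam (n l))^2" using lamn[of l] by simp
      have "(lam (n l))^2 \<le> (R * lam (n (Suc l)))^2"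
        by (rule power_mono[OF ratio]) (use lamn[of l] in simp)
      then show "(lam (n l))^2 \<le> R^2 * (lam (n (Suc l)))^2"
        by (simp add: power_mult_distrib)
    qed simp
    ultimately show ?thesis by simp
  qed
  have TP: "T \<le> R^2 * b^2 * P"
  proof -
    have "T = (\<Sum>l<j. w (Suc l))" unfolding T_def by (simp add: sum.atLeast1_atMost_eq)
    also have "\<dots> \<le> (\<Sum>l<j. R^2 * b^2 * w l)" by (intro sum_mono wstep) auto
    also have "\<dots> = R^2 * b^2 * P" unfolding P_def by (simp add: sum_distrib_left)
    finally show ?thesis .
  qed
  define x' where "x' = K * sqrt T"
  define y' where "y' = 1 / lam (n j)"
  have y'0: "y' > 0" using lamn by (simp add: y'_def)
  have x'0: "x' \<ge> 0" using K1 T0 by (simp add: x'_def)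
  have y'sq: "y'^2 = w j" by (simp add: wj y'_def power_one_over)
  have key: "(x' + y')^2 \<le> (K^2 * R^2 + 1) * S"
  proof -
    define v where "v = sqrt P"
    have v0: "v \<ge> 0" and vsq: "v^2 = P" using P0 by (auto simp: v_def)
    have "sqrt T \<le> sqrt (R^2 * b^2 * P)" using TP by (rule real_sqrt_le_mono)
    also have "\<dots> = R * b * v" using Rpos b by (simp add: v_def real_sqrt_mult)
    finally have sT: "sqrt T \<le> R * b * v" .
    have "K * sqrt T \<le> K * (R * b * v)" using sT K1 by (intro mult_left_mono) auto
    then have xb: "x' \<le> b * (K * R * v)" unfolding x'_def by (simp add: mult_ac)
    define u where "u = K * R * y'"
    have sq0: "0 \<le> (u - v)^2" by simp
    have "(u - v)^2 = u^2 + v^2 - 2 * (u * v)" by (simp add: power2_diff mult.assoc)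
    then have amgm: "2 * (u * v) \<le> u^2 + v^2" using sq0 by linarith
    have "(x' + y')^2 \<le> (b * (K * R * v) + y')^2"
      using xb x'0 y'0 by (intro power_mono) auto
    also have "\<dots> = b^2 * (K^2 * R^2 * P) + b * (2 * (u * v)) + y'^2"
      by (simp add: u_def vsq[symmetric] power2_eq_square algebra_simps)
    also have "\<dots> \<le> 1 * (K^2 * R^2 * P) + 1 * (u^2 + v^2) + y'^2"
    proof -
      have A: "b^2 \<le> 1" using b by (simp add: power_le_one)
      have B: "0 \<le> K^2 * R^2 * P" using P0 by simp
      have C: "b * (2 * (u * v)) \<le> 1 * (u^2 + v^2)"
      proof (cases "2 * (u * v) \<ge> 0")
        case True
        then have "b * (2 * (u * v)) \<le> 1 * (2 * (u * v))" using b by (intro mult_right_mono) auto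
        then show ?thesis using amgm by simp
      next
        case False
        then have "b * (2 * (u * v)) \<le> 0" using b by (simp add: mult_nonneg_nonpos)
        moreover have "0 \<le> u^2 + v^2" by simp
        ultimately have "b * (2 * (u * v)) \<le> u^2 + v^2" by (rule order_trans)
        then show ?thesis by (simp only: mult_1)
      qed
      show ?thesis using mult_right_mono[OF A B] C by linarith
    qed
    also have "\<dots> = (K^2 * R^2 + 1) * S"
      unfolding SP u_def using vsq y'sq by (simp add: power_mult_distrib algebra_simps)
    finally show ?thesis .
  qed
  have condS: "(K^2 * R^2 + 1) * S < rho^2 / eps^2"
  proof -
    have e1: "(a + 1)^2 * R^2 / (a - 1)^2 = K^2 * R^2" by (simp add: K_def power_divide)
    have e2: "(\<Sum>k=0..j. b powi (2 * (int k - int j)) / (lam (n k))^2) = S"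
      unfolding S_def
    proof (rule sum.cong[OF refl])
      fix k assume "k \<in> {0..j}"
      then have kj: "k \<le> j" by simp
      have eq: "2 * (int k - int j) = - int (2 * (j - k))" using kj by simp
      have "b powi (2 * (int k - int j)) = b powi (- int (2 * (j - k)))" by (simp only: eq)
      also have "\<dots> = inverse (b ^ (2 * (j - k)))"
        by (simp only: power_int_minus power_int_of_nat)
      also have "\<dots> = inverse ((b ^ (j - k))^2)" by (simp only: power_even_eq)
      also have "\<dots> = (q^(j-k))^2" by (simp add: q_def power_one_over inverse_eq_divide)
      finally show "b powi (2 * (int k - int j)) / (lam (n k))^2 = w k" by (simp add: w_def)
    qed
    show ?thesis using cnd unfolding R_def[symmetric] e1 e2 .
  qed
  have sum_pos: "x' + y' > 0" using x'0 y'0 by simp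
  have lt: "x' + y' < rho / eps"
  proof -
    have "(rho / eps)^2 = rho^2 / eps^2" by (simp add: power_divide)
    then have h2: "(x' + y')^2 < (rho / eps)^2" using order_le_less_trans[OF key condS] by simp
    show ?thesis by (rule power_less_imp_less_base[OF h2]) (use rho eps in simp)
  qed
  define \<delta> where "\<delta> = rho / (x' + y')"
  have d0: "\<delta> > 0" using rho sum_pos by (simp add: \<delta>_def)
  have deps: "\<delta> > eps"
  proof -
    have "(x' + y') * eps < rho" using lt pos_less_divide_eq[OF eps] by blast
    moreover have "eps * (x' + y') = (x' + y') * eps" by (rule mult.commute)
    ultimately have "eps * (x' + y') < rho" by linarith
    then show ?thesis unfolding \<delta>_def using pos_less_divide_eq[OF sum_pos] by blast
  qed
  have drho: "\<delta> * x' + \<delta> * y' = rho"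
  proof -
    have "\<delta> * x' + \<delta> * y' = \<delta> * (x' + y')" by (simp only: distrib_left)
    also have "\<dots> = rho" unfolding \<delta>_def using sum_pos by simp
    finally show ?thesis .
  qed
  have nle: "n l \<le> n j" if "l \<le> j" for l using strict_mono_less_eq[OF n_mono] that by simp
  have blk_u: "l = m" if "m \<ge> 1" "n (m - 1) < n l" "n l \<le> n m" for l m
  proof -
    have "m - 1 < l" using that(2) by (simp add: strict_mono_less[OF n_mono])
    moreover have "l \<le> m" using that(3) by (simp add: strict_mono_less_eq[OF n_mono])
    ultimately show ?thesis using that(1) by linarith
  qed
  define c where "c l = \<delta> * K * q^(j-l) / lam (n l)" for l
  define f1 where "f1 i = (\<Sum>l\<in>{1..j}. if i = n l then c l else 0)" for i
  have f1_at: "f1 (n m) = c m" if "m \<in> {1..j}" for m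
  proof -
    have "f1 (n m) = (\<Sum>l\<in>{1..j}. if l = m then c l else 0)"
      unfolding f1_def by (intro sum.cong refl) (auto simp: sm_eq[OF n_mono])
    also have "\<dots> = c m" using that by simp
    finally show ?thesis .
  qed
  have f1_off: "f1 i = 0" if "i \<notin> n ` {1..j}" for i
    unfolding f1_def using that by (intro sum.neutral) auto
  have img_sub: "n ` {1..j} \<subseteq> {1..n j}" using nge nle by auto
  have f1_supp: "f1 i = 0" if "i \<notin> {1..n j}" for i
  proof -
    have "i \<notin> n ` {1..j}" using img_sub that by auto
    then show ?thesis by (rule f1_off)
  qed
  have f1FS: "f1 \<in> FS" using f1_supp by (intro FS_I[of "{1..n j}"]) auto
  have lc: "lam (n m) * c m = \<delta> * K * q^(j-m)" for m
    using lamn[of m] by (simp add: c_def)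
  have sig_f1: "L2_set (\<lambda>i. lam i * f1 i) {n (m - 1) + 1..n m} = (if m \<le> j then \<delta> * K * q^(j-m) else 0)"
    if m1: "m \<ge> 1" for m
  proof -
    have nm_in: "n m \<in> {n (m - 1) + 1..n m}"
      using strict_mono_less[OF n_mono, of "m - 1" m] m1 by auto
    have fb: "f1 i = (if i = n m \<and> m \<le> j then c m else 0)" if "i \<in> {n (m - 1) + 1..n m}" for i
    proof (cases "i = n m \<and> m \<le> j")
      case True then show ?thesis using f1_at m1 by auto
    next
      case False
      have "i \<notin> n ` {1..j}"
      proof
        assume "i \<in> n ` {1..j}"
        then obtain l where l: "l \<in> {1..j}" "i = n l" by auto
        then have "l = m" using blk_u[OF m1] that by auto
        then show False using False l by auto
      qed
      then show ?thesis using False f1_off by auto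
    qed
    show ?thesis
    proof (cases "m \<le> j")
      case True
      have "L2_set (\<lambda>i. lam i * f1 i) {n (m - 1) + 1..n m}
          = L2_set (\<lambda>i. if i = n m then \<delta> * K * q^(j-m) else 0) {n (m - 1) + 1..n m}"
        using fb True lc by (intro L2_set_cong) auto
      also have "\<dots> = sqrt ((\<delta> * K * q^(j-m))^2)"
      proof -
        have "(\<Sum>i\<in>{n (m - 1) + 1..n m}. (if i = n m then \<delta> * K * q^(j-m) else 0)^2)
            = (\<Sum>i\<in>{n (m - 1) + 1..n m}. if i = n m then (\<delta> * K * q^(j-m))^2 else 0)"
          by (intro sum.cong refl) simp
        also have "\<dots> = (\<delta> * K * q^(j-m))^2" using nm_in by (simp only: sum.delta finite_atLeastAtMost if_True)
        finally show ?thesis unfolding L2_set_def by simp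
      qed
      also have "\<dots> = \<delta> * K * q^(j-m)" using d0 K1 q1 by simp
      finally show ?thesis using True by simp
    next
      case False
      then have "L2_set (\<lambda>i. lam i * f1 i) {n (m - 1) + 1..n m} = 0" using fb by (intro L2_set_0') auto
      then show ?thesis using False by simp
    qed
  qed
  have norm_f1: "L2_set f1 {1..n j} = \<delta> * x'"
  proof -
    have "(\<Sum>i\<in>{1..n j}. (f1 i)^2) = (\<Sum>i\<in>n ` {1..j}. (f1 i)^2)"
      using img_sub f1_off by (intro sum.mono_neutral_right) auto
    also have "\<dots> = (\<Sum>l\<in>{1..j}. (f1 (n l))^2)"
      using strict_mono_imp_inj_on[OF n_mono] by (subst sum.reindex) (auto intro: inj_on_subset)
    also have "\<dots> = (\<Sum>l\<in>{1..j}. (\<delta> * K)^2 * w l)"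
      using f1_at by (intro sum.cong refl) (simp add: c_def w_def power_mult_distrib power_divide)
    also have "\<dots> = (\<delta> * K)^2 * T" unfolding T_def by (simp add: sum_distrib_left)
    finally have "(\<Sum>i\<in>{1..n j}. (f1 i)^2) = (\<delta> * K)^2 * T" .
    then have "L2_set f1 {1..n j} = sqrt ((\<delta> * K)^2 * T)" unfolding L2_set_def by simp
    also have "\<dots> = \<delta> * K * sqrt T" using d0 K1 by (simp add: real_sqrt_mult)
    finally show ?thesis by (simp add: x'_def)
  qed
  have sig_eq: "sigma lam n m h = L2_set (\<lambda>i. lam i * h i) {n (m - 1) + 1..n m}" for m h
    by (simp add: sigma_def L2_set_def)
  have gen_cone: "(\<lambda>i. f1 i + gg i) \<in> cone lam n a b"
    if gFS: "gg \<in> FS" and gsup: "\<forall>i. i \<notin> {1..n j} \<longrightarrow> gg i = 0"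
      and gb: "L2_set (\<lambda>i. lam i * gg i) {1..n j} \<le> \<delta>" for gg
  proof -
    define h where "h = (\<lambda>i. f1 i + gg i)"
    have hl2: "h \<in> l2sp" unfolding h_def by (intro FS_l2sp FS_add f1FS gFS)
    define G where "G m = L2_set (\<lambda>i. lam i * gg i) {n (m - 1) + 1..n m}" for m
    define F where "F m = L2_set (\<lambda>i. lam i * f1 i) {n (m - 1) + 1..n m}" for m
    have Gle: "G m \<le> \<delta>" for m
    proof -
      have "G m \<le> L2_set (\<lambda>i. lam i * gg i) {1..n j}"
        unfolding G_def using gsup by (intro L2_set_sub) auto
      then show ?thesis using gb by linarith
    qed
    have G0: "G m = 0" if "m > j" for m
    proof -
      have "n j \<le> n (m - 1)" using that by (simp add: strict_mono_less_eq[OF n_mono])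
      then show ?thesis unfolding G_def using gsup by (intro L2_set_0') auto
    qed
    have up: "sigma lam n m h \<le> F m + G m" for m
    proof -
      have "sigma lam n m h = L2_set (\<lambda>i. lam i * f1 i + lam i * gg i) {n (m - 1) + 1..n m}"
        unfolding sig_eq h_def by (simp add: distrib_left)
      also have "\<dots> \<le> F m + G m" unfolding F_def G_def by (rule L2_set_triangle_ineq)
      finally show ?thesis .
    qed
    have lo: "F m \<le> sigma lam n m h + G m" for m
    proof -
      have "F m = L2_set (\<lambda>i. lam i * h i + - (lam i * gg i)) {n (m - 1) + 1..n m}"
        unfolding F_def h_def by (simp add: distrib_left)
      also have "\<dots> \<le> L2_set (\<lambda>i. lam i * h i) {n (m - 1) + 1..n m} + L2_set (\<lambda>i. - (lam i * gg i)) {n (m - 1) + 1..n m}"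
        by (rule L2_set_triangle_ineq)
      also have "\<dots> = sigma lam n m h + G m" unfolding sig_eq G_def L2_set_uminus ..
      finally show ?thesis .
    qed
    have "\<forall>m\<ge>1. \<forall>r\<ge>1. sigma lam n (m + r) h \<le> a * b ^ r * sigma lam n m h"
    proof (intro allI impI)
      fix m r :: nat assume m1: "m \<ge> 1" and r1: "r \<ge> 1"
      have abr: "a * b^r > 0" using a b by simp
      have sig0: "sigma lam n m h \<ge> 0" unfolding sig_eq by simp
      show "sigma lam n (m + r) h \<le> a * b ^ r * sigma lam n m h"
      proof (cases "m + r \<le> j")
        case False
        have "F (m + r) = 0" using sig_f1[of "m + r"] m1 False unfolding F_def by simp
        moreover have "G (m + r) = 0" using G0 False by simp
        ultimately have "sigma lam n (m + r) h \<le> 0" using up[of "m + r"] by simp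
        moreover have "0 \<le> a * b ^ r * sigma lam n m h" using abr sig0 by simp
        ultimately show ?thesis by linarith
      next
        case True
        define Y where "Y = q^(j - (m + r))"
        have Y1: "Y \<ge> 1" unfolding Y_def using q1 by (rule one_le_power)
        have Fmr: "F (m + r) = \<delta> * K * Y" using sig_f1[of "m + r"] m1 True unfolding F_def Y_def by simp
        have "j - m = (j - (m + r)) + r" using True by simp
        then have "q^(j - m) = Y * q^r" unfolding Y_def by (simp add: power_add)
        then have Fm: "F m = \<delta> * K * Y * q^r" using sig_f1[of m] m1 True unfolding F_def by simp
        have qr: "b^r * q^r = 1" using bq by (simp flip: power_mult_distrib)
        have br: "b^r \<le> 1" using b by (simp add: power_le_one)
        have s1: "sigma lam n (m + r) h \<le> \<delta> * K * Y + \<delta>" using up[of "m + r"] Fmr Gle[of "m + r"] by linarith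
        have s2: "\<delta> * K * Y * q^r - \<delta> \<le> sigma lam n m h" using lo[of m] Fm Gle[of m] by linarith
        have e1: "a * b^r * (\<delta> * K * Y * q^r - \<delta>) = a * \<delta> * K * Y * (b^r * q^r) - a * b^r * \<delta>"
          by (simp add: algebra_simps)
        have e2: "a * \<delta> * K * Y - \<delta> * K * Y = ((a - 1) * K) * Y * \<delta>" by (simp add: algebra_simps)
        have e3: "((a - 1) * K) * Y * \<delta> = (a + 1) * Y * \<delta>" using aK by simp
        have h2: "(a + 1) * Y * \<delta> \<ge> (a + 1) * 1 * \<delta>"
          using Y1 a d0 by (intro mult_right_mono mult_left_mono) auto
        have h3: "a * b^r * \<delta> \<le> a * 1 * \<delta>"
          using br a d0 by (intro mult_right_mono mult_left_mono) auto
        have mid: "\<delta> * K * Y + \<delta> \<le> a * b^r * (\<delta> * K * Y * q^r - \<delta>)"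
          unfolding e1 qr using e2 e3 h2 h3 by (simp add: algebra_simps)
        have last: "a * b^r * (\<delta> * K * Y * q^r - \<delta>) \<le> a * b ^ r * sigma lam n m h"
          using s2 abr by (intro mult_left_mono) auto
        show ?thesis using s1 mid last by linarith
      qed
    qed
    then show ?thesis using hl2 unfolding cone_def h_def by simp
  qed
  have gen_B: "(\<lambda>i. f1 i + gg i) \<in> Bset rho"
    if gFS: "gg \<in> FS" and gsup: "\<forall>i. i \<notin> {1..n j} \<longrightarrow> gg i = 0"
      and gb: "L2_set gg {1..n j} \<le> \<delta> * y'" for gg
  proof -
    have hl2: "(\<lambda>i. f1 i + gg i) \<in> l2sp" by (intro FS_l2sp FS_add f1FS gFS)
    have "l2norm (\<lambda>i. f1 i + gg i) = L2_set (\<lambda>i. f1 i + gg i) {1..n j}"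
      using gsup f1_supp by (intro l2norm_fin) auto
    also have "\<dots> \<le> L2_set f1 {1..n j} + L2_set gg {1..n j}" by (rule L2_set_triangle_ineq)
    also have "\<dots> \<le> rho" using norm_f1 gb drho by linarith
    finally show ?thesis using hl2 unfolding Bset_def by simp
  qed
  have zFS: "(\<lambda>_. 0::real) \<in> FS" by (rule FS_I[of "{}"]) auto
  have f1_cone: "f1 \<in> cone lam n a b" using gen_cone[OF zFS] d0 by (simp add: L2_set_def)
  have f1_B: "f1 \<in> Bset rho" using gen_B[OF zFS] d0 y'0 by (simp add: L2_set_def)
  show ?thesis unfolding comp_def
  proof (rule INF_greatest)
    fix A assume "A \<in> {A. admissible lam (cone lam n a b) A}"
    then have adm: "admissible lam (cone lam n a b) A" by simp
    have f1C: "f1 \<in> cone lam n a b \<inter> Bset rho" using f1_cone f1_B by simp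
    have "n j \<le> alg_cost A f1 eps"
    proof (rule ccontr)
      assume "\<not> n j \<le> alg_cost A f1 eps"
      then have klt: "alg_cost A f1 eps < n j" by simp
      obtain g0 where g0: "\<forall>i. i \<notin> {1..n j} \<longrightarrow> g0 i = 0" "\<exists>i. g0 i \<noteq> 0"
        "\<forall>t. alg_out A (\<lambda>i. f1 i + t * g0 i) eps = alg_out A f1 eps"
        using fool[OF adm eps f1_cone f1FS klt] by blast
      define N0 where "N0 = L2_set (\<lambda>i. lam i * g0 i) {1..n j}"
      have N0pos: "N0 > 0"
      proof -
        obtain i where i: "g0 i \<noteq> 0" using g0(2) by blast
        then have iI: "i \<in> {1..n j}" using g0(1) by blast
        then have "lam i > 0" using lam_pos by simp
        then have "lam i * g0 i \<noteq> 0" using i by simp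
        then have "N0 \<noteq> 0" unfolding N0_def using iI by (subst L2_set_eq_0_iff) auto
        moreover have "N0 \<ge> 0" unfolding N0_def by simp
        ultimately show ?thesis by linarith
      qed
      define cg where "cg = \<delta> / N0"
      have cg0: "cg > 0" using d0 N0pos by (simp add: cg_def)
      define g where "g i = cg * g0 i" for i
      have g0FS: "g0 \<in> FS" using g0(1) by (intro FS_I[of "{1..n j}"]) auto
      have gFS: "g \<in> FS" unfolding g_def by (rule FS_scale[OF g0FS])
      have mgFS: "(\<lambda>i. - g i) \<in> FS" using FS_scale[OF gFS, of "-1"] by simp
      have gsup: "\<forall>i. i \<notin> {1..n j} \<longrightarrow> g i = 0" using g0(1) by (simp add: g_def)
      have mgsup: "\<forall>i. i \<notin> {1..n j} \<longrightarrow> - g i = 0" using gsup by simp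
      have Sg: "L2_set (\<lambda>i. lam i * g i) {1..n j} = \<delta>"
      proof -
        have "L2_set (\<lambda>i. lam i * g i) {1..n j} = L2_set (\<lambda>i. cg * (lam i * g0 i)) {1..n j}"
          unfolding g_def by (simp add: mult_ac)
        also have "\<dots> = cg * N0" unfolding N0_def L2_set_scale using cg0 by simp
        also have "\<dots> = \<delta>" using N0pos by (simp add: cg_def)
        finally show ?thesis .
      qed
      have Smg: "L2_set (\<lambda>i. lam i * - g i) {1..n j} = \<delta>"
        using Sg L2_set_uminus[of "\<lambda>i. lam i * g i"] by simp
      have gnorm: "L2_set g {1..n j} \<le> \<delta> * y'"
      proof -
        have "L2_set g {1..n j} = L2_set (\<lambda>i. \<bar>g i\<bar>) {1..n j}" by (simp add: L2_set_abs)
        also have "\<dots> \<le> L2_set (\<lambda>i. \<bar>lam i * g i\<bar> * (1 / lam (n j))) {1..n j}"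
        proof (rule L2_set_mono)
          fix i assume i: "i \<in> {1..n j}"
          have li: "lam (n j) \<le> lam i" using lam_anti[OF lam_mono, of i "n j"] i by simp
          have "lam (n j) * \<bar>g i\<bar> \<le> lam i * \<bar>g i\<bar>" using li by (intro mult_right_mono) auto
          then have "\<bar>g i\<bar> \<le> lam i * \<bar>g i\<bar> / lam (n j)" using lamn[of j] by (simp add: le_divide_eq mult.commute)
          moreover have "lam i > 0" using lam_pos i by simp
          ultimately show "\<bar>g i\<bar> \<le> \<bar>lam i * g i\<bar> * (1 / lam (n j))" by (simp add: abs_mult)
        qed simp
        also have "\<dots> = L2_set (\<lambda>i. \<bar>lam i * g i\<bar>) {1..n j} * (1 / lam (n j))"
          using lamn[of j] by (subst L2_set_left_distrib) auto
        also have "\<dots> = \<delta> * y'" unfolding L2_set_abs Sg y'_def by simp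
        finally show ?thesis .
      qed
      have mgnorm: "L2_set (\<lambda>i. - g i) {1..n j} \<le> \<delta> * y'" using gnorm by (simp add: L2_set_uminus)
      define hp where "hp = (\<lambda>i. f1 i + g i)"
      define hm where "hm = (\<lambda>i. f1 i + - g i)"
      have hpC: "hp \<in> cone lam n a b" unfolding hp_def using gen_cone[OF gFS gsup] Sg by simp
      have hmC: "hm \<in> cone lam n a b" unfolding hm_def using gen_cone[OF mgFS mgsup] Smg by simp
      have hpFS: "hp \<in> FS" unfolding hp_def by (intro FS_add f1FS gFS)
      have hmFS: "hm \<in> FS" unfolding hm_def by (intro FS_add f1FS mgFS)
      define out where "out = alg_out A f1 eps"
      have outl2: "out \<in> l2sp" using adm f1_cone eps unfolding admissible_def out_def by blast
      have op: "alg_out A hp eps = out"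
        using g0(3)[rule_format, of cg] unfolding hp_def g_def out_def by simp
      have om: "alg_out A hm eps = out"
      proof -
        have "hm = (\<lambda>i. f1 i + (- cg) * g0 i)" unfolding hm_def g_def by simp
        then show ?thesis using g0(3)[rule_format, of "- cg"] unfolding out_def by simp
      qed
      have err: "L2_set (\<lambda>i. lam i * h i - out i) {1..n j} \<le> eps"
        if hC: "h \<in> cone lam n a b" and hFS: "h \<in> FS" and ho: "alg_out A h eps = out" for h
      proof -
        have "l2norm (\<lambda>i. Sop lam h i - alg_out A h eps i) \<le> eps"
          using adm hC eps unfolding admissible_def by blast
        then have "l2norm (\<lambda>i. lam i * h i - out i) \<le> eps" using ho by (simp add: Sop_def)
        moreover have "L2_set (\<lambda>i. lam i * h i - out i) {1..n j} \<le> l2norm (\<lambda>i. lam i * h i - out i)"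
          by (intro L2_le_l2norm diff_summable hFS outl2) simp
        ultimately show ?thesis by linarith
      qed
      have "2 * \<delta> = L2_set (\<lambda>i. 2 * (lam i * g i)) {1..n j}"
        using Sg L2_set_scale[of 2 "\<lambda>i. lam i * g i" "{1..n j}"] by simp
      also have "\<dots> = L2_set (\<lambda>i. (lam i * hp i - out i) + - (lam i * hm i - out i)) {1..n j}"
        unfolding hp_def hm_def by (intro L2_set_cong refl) (simp add: algebra_simps)
      also have "\<dots> \<le> L2_set (\<lambda>i. lam i * hp i - out i) {1..n j} + L2_set (\<lambda>i. - (lam i * hm i - out i)) {1..n j}"
        by (rule L2_set_triangle_ineq)
      also have "\<dots> \<le> eps + eps"
        unfolding L2_set_uminus using err[OF hpC hpFS op] err[OF hmC hmFS om] by linarith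
      finally show False using deps by linarith
    qed
    then have "enat (n j) \<le> enat (alg_cost A f1 eps)" by simp
    then show "enat (n j) \<le> cost_set A (cone lam n a b) eps rho"
      unfolding cost_set_def using f1C by (meson SUP_upper2)
  qed
qed


theorem theorem2:
  fixes lam :: "nat \<Rightarrow> real" and n :: "nat \<Rightarrow> nat" and a b eps rho :: real
  assumes lam_pos: "\<forall>i\<ge>1. lam i > 0"
    and lam_mono: "\<forall>i\<ge>1. lam (Suc i) \<le> lam i"
    and lam_lim: "lam \<longlonglongrightarrow> 0"
    and n_mono: "strict_mono n"
    and n0: "n 0 \<ge> 1"
    and b: "0 < b" "b < 1" and a: "1 < a"
    and R_fin: "bdd_above {lam (n (k - 1)) / lam (n k) | k. k \<ge> 1}"
    and eps: "eps > 0" and rho: "rho > 0"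
  defines "cond \<equiv> (\<lambda>j::nat. ((a + 1)^2 * (Sup {lam (n (k - 1)) / lam (n k) | k. k \<ge> 1})^2 / (a - 1)^2 + 1)
            * (\<Sum>k=0..j. b powi (2 * (int k - int j)) / (lam (n k))^2) < rho^2 / eps^2)"
  shows "(\<forall>j\<ge>1. cond j \<longrightarrow> enat (n j) \<le> comp lam (cone lam n a b) eps rho) \<and>
         (\<forall>j. (j \<ge> 1 \<and> cond j \<and> (\<forall>j'\<ge>1. cond j' \<longrightarrow> j' \<le> j))
              \<longrightarrow> enat (n j) \<le> comp lam (cone lam n a b) eps rho)"
proof -
  have P: "enat (n j) \<le> comp lam (cone lam n a b) eps rho" if "j \<ge> 1" "cond j" for j
    using main_bound[OF lam_pos lam_mono n_mono n0 b a R_fin eps rho that(1)] that(2)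
    unfolding cond_def by blast
  show ?thesis using P by blast
qed

end
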